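(* Let $x,y,z$ be indeterminates over the field $\mathbb{Q}$ of rational numbers. The Krull domain $R=\mathbb{Q}[x,y,zx,zy]$ (the subring of $\mathbb{Q}[x,y,z]$ generated over $\mathbb{Q}$ by $x,y,zx,zy$) is not a half-factorial domain.
   Context: A half-factorial domain is an atomic domain in which any two factorizations of a nonzero nonunit into irreducible elements have the same number of factors. *)

theory Defs
  imports "HOL-Computational_Algebra.Polynomial"
begin

text \<open>The polynomial ring Q[x,y,z] is represented as nested univariate polynomials
  ((Q[x])[y])[z], i.e. the type rat poly poly poly.\<close>

type_synonym qxyz = "rat poly poly poly"

definition const3 :: "rat \<Rightarrow> qxyz" where
  "const3 c = [:[:[:c:]:]:]"

definition var_x :: qxyz where "var_x = [:[:[:0, 1:]:]:]"
definition var_y :: qxyz where "var_y = [:[:0, 1:]:]"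
definition var_z :: qxyz where "var_z = [:0, 1:]"

inductive_set R_ring :: "qxyz set" where
  const: "const3 c \<in> R_ring"
| gen_x: "var_x \<in> R_ring"
| gen_y: "var_y \<in> R_ring"
| gen_zx: "var_z * var_x \<in> R_ring"
| gen_zy: "var_z * var_y \<in> R_ring"
| add: "a \<in> R_ring \<Longrightarrow> b \<in> R_ring \<Longrightarrow> a + b \<in> R_ring"
| mult: "a \<in> R_ring \<Longrightarrow> b \<in> R_ring \<Longrightarrow> a * b \<in> R_ring"

definition unit_in :: "'a::idom set \<Rightarrow> 'a \<Rightarrow> bool" where
  "unit_in S u \<longleftrightarrow> u \<in> S \<and> (\<exists>v\<in>S. u * v = 1)"

definition irreducible_in :: "'a::idom set \<Rightarrow> 'a \<Rightarrow> bool" where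
  "irreducible_in S a \<longleftrightarrow> a \<in> S \<and> a \<noteq> 0 \<and> \<not> unit_in S a \<and>
     (\<forall>b\<in>S. \<forall>c\<in>S. a = b * c \<longrightarrow> unit_in S b \<or> unit_in S c)"

definition atomic_in :: "'a::idom set \<Rightarrow> bool" where
  "atomic_in S \<longleftrightarrow> (\<forall>a\<in>S. a \<noteq> 0 \<and> \<not> unit_in S a \<longrightarrow>
     (\<exists>fs. fs \<noteq> [] \<and> (\<forall>f\<in>set fs. irreducible_in S f) \<and> prod_list fs = a))"

definition half_factorial_in :: "'a::idom set \<Rightarrow> bool" where
  "half_factorial_in S \<longleftrightarrow> atomic_in S \<and>
     (\<forall>a\<in>S. a \<noteq> 0 \<and> \<not> unit_in S a \<longrightarrow>
       (\<forall>fs gs. (\<forall>f\<in>set fs. irreducible_in S f) \<and> (\<forall>g\<in>set gs. irreducible_in S g)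
          \<and> prod_list fs = a \<and> prod_list gs = a \<longrightarrow> length fs = length gs))"

end

theory Submission
  imports Defs "HOL-Computational_Algebra.Polynomial_Factorial" "HOL-Computational_Algebra.Field_as_Ring"
begin


definition Good :: "qxyz \<Rightarrow> bool" where
  "Good f \<longleftrightarrow> (\<forall>c b. ([:0,1:]::rat poly)^(c-b) dvd coeff (coeff f c) b)"

lemma Good_add: "Good f \<Longrightarrow> Good g \<Longrightarrow> Good (f+g)"
  unfolding Good_def by (simp add: dvd_add)

lemma Good_mult: assumes "Good f" "Good g" shows "Good (f*g)"
  unfolding Good_def
proof (intro allI)
  fix c b
  have "coeff (coeff (f*g) c) b = (\<Sum>i\<le>c. \<Sum>j\<le>b. coeff (coeff f i) j * coeff (coeff g (c-i)) (b-j))"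
    by (simp add: coeff_mult coeff_sum)
  also have "([:0,1:]::rat poly)^(c-b) dvd \<dots>"
  proof (intro dvd_sum)
    fix i j assume i: "i \<in> {..c}" and j: "j \<in> {..b}"
    have "([:0,1:]::rat poly)^((i-j) + ((c-i)-(b-j))) dvd coeff (coeff f i) j * coeff (coeff g (c-i)) (b-j)"
      unfolding power_add
    proof (rule mult_dvd_mono)
      show "([:0,1:]::rat poly)^(i-j) dvd coeff (coeff f i) j" using assms(1) unfolding Good_def by blast
      show "([:0,1:]::rat poly)^((c-i)-(b-j)) dvd coeff (coeff g (c-i)) (b-j)" using assms(2) unfolding Good_def by blast
    qed
    moreover have "c - b \<le> (i-j) + ((c-i)-(b-j))" using i j by auto
    ultimately show "([:0,1:]::rat poly)^(c-b) dvd coeff (coeff f i) j * coeff (coeff g (c-i)) (b-j)"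
      using le_imp_power_dvd dvd_trans by blast
  qed
  finally show "([:0,1:]::rat poly)^(c-b) dvd coeff (coeff (f*g) c) b" .
qed

lemma R_Good: "f \<in> R_ring \<Longrightarrow> Good f"
proof (induction rule: R_ring.induct)
  case (const c) then show ?case unfolding Good_def const3_def
    by (auto simp: coeff_pCons split: nat.split)
next
  case gen_x then show ?case unfolding Good_def var_x_def
    by (auto simp: coeff_pCons split: nat.split)
next
  case gen_y then show ?case unfolding Good_def var_y_def
    by (auto simp: coeff_pCons split: nat.split)
next
  case gen_zx then show ?case unfolding Good_def var_x_def var_z_def
    by (auto simp: coeff_pCons split: nat.split)
next
  case gen_zy then show ?case unfolding Good_def var_y_def var_z_def
    by (auto simp: coeff_pCons split: nat.split)
next
  case (add a b) then show ?case by (simp add: Good_add)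
next
  case (mult a b) then show ?case by (simp add: Good_mult)
qed



definition NN :: qxyz where "NN = [:[:0,1:], 0, 1:]"
definition PP :: qxyz where "PP = [:[:[:0,0,1:]:], [:0,0,0,1:]:]"

lemma prime_z: "prime_elem var_z"
  unfolding var_z_def by (rule prime_elem_linear_poly) auto

lemma prime_x: "prime_elem var_x"
  unfolding var_x_def prime_elem_const_poly_iff by (rule prime_elem_linear_field_poly) auto

lemma prime_Xd: "prime_elem ([:[:0,1:]:] :: rat poly poly)"
  unfolding prime_elem_const_poly_iff by (rule prime_elem_linear_field_poly) auto

lemma prime_Yd: "prime_elem ([:0,1:] :: rat poly poly)"
  by (rule prime_elem_linear_poly) auto

lemma coprime_XY: "coprime ([:[:0,0,1:]:] :: rat poly poly) [:0,0,0,1:]"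
proof -
  have "\<not> ([:[:0,1:]:] :: rat poly poly) dvd [:0,1:]"
  proof
    assume "([:[:0,1:]:] :: rat poly poly) dvd [:0,1:]"
    hence "([:0,1:]::rat poly) dvd coeff [:0,1:] 1" unfolding const_poly_dvd_iff by blast
    hence "([:0,1:]::rat poly) dvd 1" by simp
    thus False by (auto simp: is_unit_poly_iff)
  qed
  hence c: "coprime ([:[:0,1:]:] :: rat poly poly) [:0,1:]"
    using prime_Xd prime_elem_imp_coprime by blast
  have e1: "([:[:0,0,1:]:] :: rat poly poly) = [:[:0,1:]:]^2" by (simp add: power2_eq_square)
  have e2: "([:0,0,0,1:] :: rat poly poly) = [:0,1:]^3" by (simp add: numeral_3_eq_3)
  show ?thesis unfolding e1 e2 using c by simp
qed

lemma prime_P: "prime_elem PP"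
  unfolding PP_def by (rule prime_elem_linear_poly) (use coprime_XY in auto)



lemma coeff_mult_2: "coeff (a*b) 2 = coeff a 0 * coeff b 2 + coeff a 1 * coeff b 1 + coeff a 2 * coeff b 0"
  by (simp add: coeff_mult numeral_2_eq_2)
lemma coeff_mult_1: "coeff (a*b) 1 = coeff a 0 * coeff b 1 + coeff a 1 * coeff b 0"
  by (simp add: coeff_mult)
lemma coeff_mult_0: "coeff (a*b) 0 = coeff a 0 * coeff b 0"
  by (simp add: coeff_mult)

lemma NN_coeffs: "coeff NN 0 = [:0,1:]" "coeff NN 1 = 0" "coeff NN 2 = 1" "degree NN = 2"
  by (simp_all add: NN_def numeral_2_eq_2)

lemma deg_one_side:
  fixes a b :: qxyz
  assumes "NN = a*b" "degree a = 0"
  shows "is_unit a"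
proof -
  have "1 = coeff (a*b) 2" using assms NN_coeffs by simp
  also have "\<dots> = coeff a 0 * coeff b 2" using assms(2) by (simp add: coeff_mult_2 coeff_eq_0)
  finally have "coeff a 0 dvd 1" by (metis dvdI)
  moreover have "a = [:coeff a 0:]" using assms(2) by (metis degree_0_id)
  ultimately show ?thesis by (metis is_unit_const_poly_iff)
qed

lemma irr_N: "irreducible NN"
proof (rule irreducibleI)
  show "NN \<noteq> 0" by (simp add: NN_def)
  show "\<not> is_unit NN"
  proof
    assume "is_unit NN"
    then obtain c where "NN = [:c:]" by (auto simp: is_unit_poly_iff)
    then have "degree NN = 0" by (metis degree_pCons_0)
    then show False using NN_coeffs(4) by simp
  qed
  fix a b assume ab: "NN = a * b"
  then have a0: "a \<noteq> 0" and b0: "b \<noteq> 0" by (auto simp: NN_def)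
  have dsum: "degree a + degree b = 2" using ab a0 b0 NN_coeffs(4) by (metis degree_mult_eq)
  show "is_unit a \<or> is_unit b"
  proof (cases "degree a = 0")
    case True then show ?thesis using deg_one_side ab by blast
  next
    case False
    show ?thesis
    proof (cases "degree b = 0")
      case True then show ?thesis using deg_one_side ab by (metis mult.commute)
    next
      case False2: False
      have da: "degree a = 1" and db: "degree b = 1" using dsum False False2 by auto
      define a0 a1 b0 b1 where "a0 = coeff a 0" "a1 = coeff a 1" "b0 = coeff b 0" "b1 = coeff b 1"
      have a2: "coeff a 2 = 0" "coeff b 2 = 0" using da db by (simp_all add: coeff_eq_0)
      have e0: "a0 * b0 = [:0,1:]" using ab NN_coeffs(1) coeff_mult_0[of a b] a0_a1_b0_b1_def by simp
      have e1: "a0 * b1 + a1 * b0 = 0" using ab NN_coeffs(2) coeff_mult_1[of a b] a0_a1_b0_b1_def by simp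
      have e2: "a1 * b1 = 1" using ab NN_coeffs(3) coeff_mult_2[of a b] a0_a1_b0_b1_def a2 by simp
      have "a0 = a0 * (a1 * b1)" using e2 by simp
      also have "\<dots> = a1 * (a0 * b1)" by (simp add: ac_simps)
      also have "\<dots> = a1 * (- (a1 * b0))" using e1 by (metis add_eq_0_iff2 mult_minus_right) 
      finally have "a0 = - (a1 * a1 * b0)" by simp
      with e0 have "[:0,1:] = - ((a1 * b0)^2)" by (simp add: power2_eq_square ac_simps)
      then have "degree ([:0,1:] :: rat poly poly) = degree ((a1*b0)^2)" by (metis degree_minus)
      moreover have "a1*b0 \<noteq> 0"
      proof
        assume "a1*b0 = 0"
        with \<open>[:0,1:] = - ((a1 * b0)^2)\<close> show False by simp
      qed
      ultimately have "1 = 2 * degree (a1*b0)" by (simp add: degree_power_eq)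
      then show ?thesis by presburger
    qed
  qed
qed

lemma prime_N: "prime_elem NN"
  using irr_N by (simp add: prime_elem_iff_irreducible)



lemma split_prime:
  fixes p b c m :: qxyz
  assumes "prime_elem p" "b * c = p * m"
  shows "(\<exists>b'. b = p*b' \<and> b'*c = m) \<or> (\<exists>c'. c = p*c' \<and> b*c' = m)"
proof -
  have p0: "p \<noteq> 0" using assms(1) by auto
  have "p dvd b * c" using assms(2) by simp
  then have "p dvd b \<or> p dvd c" using assms(1) prime_elem_dvd_mult_iff by blast
  then show ?thesis
  proof
    assume "p dvd b" then obtain b' where "b = p*b'" by blast
    with assms(2) p0 have "b'*c = m" by (simp add: mult.assoc)
    with \<open>b = p*b'\<close> show ?thesis by blast
  next
    assume "p dvd c" then obtain c' where "c = p*c'" by blast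
    with assms(2) p0 have "b*c' = m" by (simp add: ac_simps)
    with \<open>c = p*c'\<close> show ?thesis by blast
  qed
qed

lemma unit_prod: "(b::qxyz) * c = 1 \<Longrightarrow> is_unit b \<and> is_unit c"
  by (metis dvd_triv_left dvd_triv_right)

lemma two_primes:
  fixes p q b c :: "qxyz"
  assumes "prime_elem p" "prime_elem q" "b * c = p * q"
  shows "is_unit b \<or> is_unit c \<or> (\<exists>u w. is_unit u \<and> is_unit w \<and>
     ((b = p*u \<and> c = q*w) \<or> (c = p*u \<and> b = q*w)))"
proof -
  from split_prime[OF assms(1) assms(3)] show ?thesis
  proof (elim disjE exE conjE)
    fix b1 assume b1: "b = p*b1" "b1*c = q"
    have "b1*c = q*1" using b1 by simp
    from split_prime[OF assms(2) this] show ?thesis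
    proof (elim disjE exE conjE)
      fix b2 assume "b1 = q*b2" "b2*c = 1"
      then show ?thesis using unit_prod by blast
    next
      fix c2 assume h: "c = q*c2" "b1*c2 = 1"
      then have "is_unit b1" "is_unit c2" using unit_prod by blast+
      then show ?thesis using h b1 by blast
    qed
  next
    fix c1 assume c1: "c = p*c1" "b*c1 = q"
    have "c1*b = q*1" using c1 by (simp add: mult.commute)
    from split_prime[OF assms(2) this] show ?thesis
    proof (elim disjE exE conjE)
      fix b2 assume "c1 = q*b2" "b2*b = 1"
      then show ?thesis using unit_prod by blast
    next
      fix c2 assume h: "b = q*c2" "c1*c2 = 1"
      then have "is_unit c1" "is_unit c2" using unit_prod by blast+
      then show ?thesis using h c1 by blast
    qed
  qed
qed

lemma inv_unit: "is_unit (u::qxyz) \<Longrightarrow> u * c = m \<Longrightarrow> c = (1 div u) * m \<and> is_unit (1 div u)"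
proof -
  assume u: "is_unit u" and m: "u * c = m"
  have "u * (1 div u) = 1" using u by simp
  then have "c = (u * (1 div u)) * c" by simp
  also have "\<dots> = (1 div u) * m" using m by (simp add: ac_simps)
  finally show ?thesis using u by simp
qed

lemma three_primes:
  fixes p q r b c :: "qxyz"
  assumes "prime_elem p" "prime_elem q" "prime_elem r" "b * c = p * (q * r)"
  shows "is_unit b \<or> is_unit c \<or> (\<exists>u w. is_unit u \<and> is_unit w \<and>
     ((b = p*u \<and> c = q*(r*w)) \<or> (c = p*u \<and> b = q*(r*w)) \<or>
      (b = q*u \<and> c = p*(r*w)) \<or> (c = q*u \<and> b = p*(r*w)) \<or>
      (b = r*u \<and> c = p*(q*w)) \<or> (c = r*u \<and> b = p*(q*w))))"
    (is "_ \<or> _ \<or> (\<exists>u w. ?Q u w)")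
proof -
  from split_prime[OF assms(1) assms(4)] show ?thesis
  proof (elim disjE exE conjE)
    fix b1 assume b1: "b = p*b1" "b1*c = q*r"
    from two_primes[OF assms(2,3) b1(2)] show ?thesis
    proof (elim disjE exE conjE)
      assume u: "is_unit b1"
      from inv_unit[OF u b1(2)] have "c = q*(r*(1 div b1))" "is_unit (1 div b1)" by (simp_all add: ac_simps)
      then have "?Q b1 (1 div b1)" using b1(1) u by simp
      then show ?thesis by blast
    next
      assume "is_unit c" then show ?thesis by blast
    next
      fix u w assume h: "is_unit u" "is_unit w" "b1 = q*u" "c = r*w"
      have "b = p*(q*u)" using h b1(1) by simp
      then have "?Q w u" using h by simp
      then show ?thesis by blast
    next
      fix u w assume h: "is_unit u" "is_unit w" "c = q*u" "b1 = r*w"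
      have "b = p*(r*w)" using h b1(1) by simp
      then have "?Q u w" using h by simp
      then show ?thesis by blast
    qed
  next
    fix c1 assume c1: "c = p*c1" "b*c1 = q*r"
    have c1': "c1*b = q*r" using c1(2) by (simp add: mult.commute)
    from two_primes[OF assms(2,3) c1'] show ?thesis
    proof (elim disjE exE conjE)
      assume u: "is_unit c1"
      from inv_unit[OF u c1'] have "b = q*(r*(1 div c1))" "is_unit (1 div c1)" by (simp_all add: ac_simps)
      then have "?Q c1 (1 div c1)" using c1(1) u by simp
      then show ?thesis by blast
    next
      assume "is_unit b" then show ?thesis by blast
    next
      fix u w assume h: "is_unit u" "is_unit w" "c1 = q*u" "b = r*w"
      have "c = p*(q*u)" using h c1(1) by simp
      then have "?Q w u" using h by simp
      then show ?thesis by blast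
    next
      fix u w assume h: "is_unit u" "is_unit w" "b = q*u" "c1 = r*w"
      have "c = p*(r*w)" using h c1(1) by simp
      then have "?Q u w" using h by simp
      then show ?thesis by blast
    qed
  qed
qed



lemma unit_const: "is_unit (u::qxyz) \<Longrightarrow> \<exists>k. k \<noteq> 0 \<and> u = const3 k"
proof -
  assume "is_unit u"
  then obtain c where c: "u = [:c:]" "is_unit c" by (auto simp: is_unit_poly_iff)
  then obtain d where d: "c = [:d:]" "is_unit d" by (auto simp: is_unit_poly_iff)
  then obtain k where k: "d = [:k:]" "is_unit k" by (auto simp: is_unit_poly_iff)
  then show ?thesis using c d by (auto simp: const3_def)
qed

lemma const3_mult: "const3 a * const3 b = const3 (a*b)"
  by (simp add: const3_def)

lemma const3_one: "const3 1 = 1"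
  by (simp add: const3_def one_pCons)

lemma unit_inI: "is_unit (u::qxyz) \<Longrightarrow> unit_in R_ring u"
proof -
  assume "is_unit u"
  then obtain k where k: "k \<noteq> 0" "u = const3 k" using unit_const by blast
  have "u * const3 (1/k) = 1" using k by (simp add: const3_mult const3_one)
  then show ?thesis unfolding unit_in_def using k R_ring.const by blast
qed

lemma unit_inD: "unit_in R_ring (u::qxyz) \<Longrightarrow> is_unit u"
  unfolding unit_in_def by (metis dvdI)

lemma cancel_R: "is_unit (u::qxyz) \<Longrightarrow> s * u \<in> R_ring \<Longrightarrow> s \<in> R_ring"
proof -
  assume "is_unit u" "s * u \<in> R_ring"
  then obtain k where k: "k \<noteq> 0" "u = const3 k" using unit_const by blast
  have "s = (s*u) * const3 (1/k)" using k by (simp add: const3_mult const3_one mult.assoc)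
  then show ?thesis using \<open>s * u \<in> R_ring\<close> R_ring.mult R_ring.const by metis
qed

lemma X_pow_not_dvd_1: "n > 0 \<Longrightarrow> \<not> ([:0,1:]::rat poly)^n dvd 1"
proof
  assume "n > 0" "([:0,1:]::rat poly)^n dvd 1"
  then have "degree (([:0,1:]::rat poly)^n) \<le> degree (1::rat poly)" by (intro dvd_imp_degree_le) auto
  with \<open>n > 0\<close> show False by (simp add: degree_power_eq)
qed

lemma z_notR: "var_z \<notin> R_ring"
proof
  assume "var_z \<in> R_ring"
  then have "Good var_z" by (rule R_Good)
  then have "([:0,1:]::rat poly)^(1-0) dvd coeff (coeff var_z 1) 0" unfolding Good_def by blast
  then show False using X_pow_not_dvd_1[of 1] by (simp add: var_z_def)
qed

lemma zz_notR: "var_z * var_z \<notin> R_ring"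
proof
  assume "var_z * var_z \<in> R_ring"
  then have "Good (var_z * var_z)" by (rule R_Good)
  then have "([:0,1:]::rat poly)^(2-0) dvd coeff (coeff (var_z * var_z) 2) 0" unfolding Good_def by blast
  then show False using X_pow_not_dvd_1[of 2] by (simp add: var_z_def numeral_2_eq_2)
qed

lemma N_notR: "NN \<notin> R_ring"
proof
  assume "NN \<in> R_ring"
  then have "Good NN" by (rule R_Good)
  then have "([:0,1:]::rat poly)^(2-0) dvd coeff (coeff NN 2) 0" unfolding Good_def by blast
  then show False using X_pow_not_dvd_1[of 2] by (simp add: NN_coeffs)
qed

lemma xN_notR: "var_x * NN \<notin> R_ring"
proof
  assume "var_x * NN \<in> R_ring"
  then have "Good (var_x * NN)" by (rule R_Good)
  then have "([:0,1:]::rat poly)^(2-0) dvd coeff (coeff (var_x * NN) 2) 0" unfolding Good_def by blast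
  moreover have "coeff (coeff (var_x * NN) 2) 0 = [:0,1:]"
    by (simp add: coeff_mult_2 NN_coeffs var_x_def)
  ultimately have "([:0,1:]::rat poly)^2 dvd [:0,1:]" by simp
  then have "degree (([:0,1:]::rat poly)^2) \<le> degree ([:0,1:]::rat poly)" by (intro dvd_imp_degree_le) auto
  then show False by (simp add: degree_power_eq)
qed

lemma PP_eq: "PP = var_x * var_x + var_y * var_y * (var_z * var_y)"
  by (simp add: PP_def var_x_def var_y_def var_z_def)

lemma NN_eq: "NN = var_z * var_z + var_y"
  by (simp add: NN_def var_y_def var_z_def)



abbreviation "A1 \<equiv> PP * NN"
abbreviation "A2 \<equiv> var_z * var_x"
abbreviation "A3 \<equiv> var_z * (var_z * PP)"
abbreviation "A4 \<equiv> var_x * (var_x * NN)"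

lemma R_x: "var_x \<in> R_ring" and R_y: "var_y \<in> R_ring" and R_zx: "var_z * var_x \<in> R_ring"
  and R_zy: "var_z * var_y \<in> R_ring"
  by (rule R_ring.intros)+

lemma P_R: "PP \<in> R_ring"
  unfolding PP_eq by (intro R_ring.add R_ring.mult R_x R_y R_zy)

lemma A1_R: "A1 \<in> R_ring"
proof -
  have "A1 = (var_z*var_x)*(var_z*var_x) + var_x*var_x*var_y
     + (var_z*var_y)*(var_z*var_y)*(var_z*var_y) + var_y*var_y*var_y*(var_z*var_y)"
    unfolding PP_eq NN_eq by (simp add: algebra_simps)
  also have "\<dots> \<in> R_ring" by (intro R_ring.add R_ring.mult R_x R_y R_zy R_zx)
  finally show ?thesis .
qed

lemma A3_R: "A3 \<in> R_ring"
proof -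
  have "A3 = (var_z*var_x)*(var_z*var_x) + (var_z*var_y)*(var_z*var_y)*(var_z*var_y)"
    unfolding PP_eq by (simp add: algebra_simps)
  also have "\<dots> \<in> R_ring" by (intro R_ring.add R_ring.mult R_x R_y R_zy R_zx)
  finally show ?thesis .
qed

lemma A4_R: "A4 \<in> R_ring"
proof -
  have "A4 = (var_z*var_x)*(var_z*var_x) + var_x*var_x*var_y"
    unfolding NN_eq by (simp add: algebra_simps)
  also have "\<dots> \<in> R_ring" by (intro R_ring.add R_ring.mult R_x R_y R_zy R_zx)
  finally show ?thesis .
qed

lemma irr_inI:
  assumes "A \<in> R_ring" "A \<noteq> 0" "\<not> is_unit A"
    "\<And>b c. b \<in> R_ring \<Longrightarrow> c \<in> R_ring \<Longrightarrow> b * c = A \<Longrightarrow> is_unit b \<or> is_unit c"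
  shows "irreducible_in R_ring A"
  unfolding irreducible_in_def using assms unit_inD unit_inI by metis

lemma notunit_of_prime: "prime_elem (p::qxyz) \<Longrightarrow> p dvd A \<Longrightarrow> \<not> is_unit A"
  by (meson dvd_trans not_prime_elem_one prime_elem_not_unit)

lemma nz: "PP \<noteq> 0" "NN \<noteq> 0" "var_x \<noteq> 0" "var_z \<noteq> 0"
  using prime_P prime_N prime_x prime_z by auto

lemma irr_A1: "irreducible_in R_ring A1"
proof (rule irr_inI)
  show "A1 \<in> R_ring" by (rule A1_R)
  show "A1 \<noteq> 0" using nz by simp
  show "\<not> is_unit A1" using notunit_of_prime[OF prime_P] by simp
  fix b c assume bc: "b \<in> R_ring" "c \<in> R_ring" "b * c = A1"
  from two_primes[OF prime_P prime_N bc(3)] show "is_unit b \<or> is_unit c"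
    using bc cancel_R N_notR by metis
qed

lemma irr_A2: "irreducible_in R_ring A2"
proof (rule irr_inI)
  show "A2 \<in> R_ring" by (rule R_zx)
  show "A2 \<noteq> 0" using nz by simp
  show "\<not> is_unit A2" using notunit_of_prime[OF prime_z] by simp
  fix b c assume bc: "b \<in> R_ring" "c \<in> R_ring" "b * c = A2"
  from two_primes[OF prime_z prime_x bc(3)] show "is_unit b \<or> is_unit c"
    using bc cancel_R z_notR by metis
qed

lemma irr_A3: "irreducible_in R_ring A3"
proof (rule irr_inI)
  show "A3 \<in> R_ring" by (rule A3_R)
  show "A3 \<noteq> 0" using nz by simp
  show "\<not> is_unit A3" using notunit_of_prime[OF prime_z] by simp
  fix b c assume bc: "b \<in> R_ring" "c \<in> R_ring" "b * c = A3"
  have zz: "\<And>w. is_unit w \<Longrightarrow> var_z * (var_z * w) \<notin> R_ring"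
    using cancel_R zz_notR by (metis mult.assoc)
  from three_primes[OF prime_z prime_z prime_P bc(3)] show "is_unit b \<or> is_unit c"
  proof (elim disjE exE conjE)
  qed (use bc z_notR zz in \<open>metis cancel_R\<close>)+
qed

lemma irr_A4: "irreducible_in R_ring A4"
proof (rule irr_inI)
  show "A4 \<in> R_ring" by (rule A4_R)
  show "A4 \<noteq> 0" using nz by simp
  show "\<not> is_unit A4" using notunit_of_prime[OF prime_x] by simp
  fix b c assume bc: "b \<in> R_ring" "c \<in> R_ring" "b * c = A4"
  have xn: "\<And>w. is_unit w \<Longrightarrow> var_x * (NN * w) \<notin> R_ring"
    using cancel_R xN_notR by (metis mult.assoc)
  from three_primes[OF prime_x prime_x prime_N bc(3)] show "is_unit b \<or> is_unit c"
  proof (elim disjE exE conjE)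
  qed (use bc N_notR xn in \<open>metis cancel_R\<close>)+
qed

theorem mainTheorem3:
  shows "\<not> half_factorial_in R_ring"
proof
  assume hf: "half_factorial_in R_ring"
  define E where "E = A1 * (A2 * (A2 * 1))"
  have E2: "prod_list [A3, A4] = E" unfolding E_def by (simp add: ac_simps)
  have E1: "prod_list [A1, A2, A2] = E" unfolding E_def by simp
  have ER: "E \<in> R_ring" unfolding E_def
    using A1_R R_zx R_ring.mult R_ring.const const3_one by metis
  have E0: "E \<noteq> 0" unfolding E_def using nz by simp
  have Eu: "\<not> unit_in R_ring E"
    using unit_inD notunit_of_prime[OF prime_z, of E] unfolding E_def by auto
  have "length [A1, A2, A2] = length [A3, A4]"
    using hf ER E0 Eu E1 E2 irr_A1 irr_A2 irr_A3 irr_A4 unfolding half_factorial_in_def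
    by (metis (no_types, lifting) empty_iff list.set(1) set_ConsD)
  then show False by simp
qed

end
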